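(* Let $E$ be an order complete vector lattice and let $T:E\to S(X)$ be Wickstead's representation of $E$, namely: $(B_\alpha)_{\alpha}$ is a family of pairwise disjoint bands of $E$, each with a weak unit $x_\alpha$, such that every $x\in E$ is written as $x=\bigvee_\alpha y_\alpha$ with $y_\alpha\in B_\alpha$; $X_\alpha$ are compact Hausdorff spaces and $T_\alpha:B_\alpha\to S(X_\alpha)$ injective lattice homomorphisms with $T_\alpha(x_\alpha)=\mathbf{1}_{X_\alpha}$ and the supremum-norm closure of $T_\alpha$ of the ideal generated by $x_\alpha$ in $B_\alpha$ equal to $C(X_\alpha)$; $X=\bigsqcup_\alpha X_\alpha$; and $T(x)=(T_\alpha(y_\alpha))_\alpha$ under the identification $S(X)=\prod_\alpha S(X_\alpha)$. Then $T(E)$ is an ideal of $S(X)$ (so $E$ can be considered as an ideal of $S(X)$).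
   Context: For a topological space $X$, $S(X)$ is the Archimedean vector lattice of equivalence classes of continuous real-valued functions defined on open dense subsets of $X$ (two functions identified if they agree on the intersection of their domains), with pointwise operations; $\mathbf{1}_X$ is the constant function $1$. For a disjoint union $X=\bigsqcup_\alpha X_\alpha$, $S(X)$ is identified with $\prod_\alpha S(X_\alpha)$ with the componentwise order. *)

theory Defs
  imports "HOL-Analysis.Analysis"
begin

definition vl_abs :: "'a::{lattice,ab_group_add} \<Rightarrow> 'a" where
  "vl_abs x = sup x (- x)"

definition is_sup :: "'a::order set \<Rightarrow> 'a \<Rightarrow> bool" where
  "is_sup A s \<longleftrightarrow> (\<forall>a\<in>A. a \<le> s) \<and> (\<forall>u. (\<forall>a\<in>A. a \<le> u) \<longrightarrow> s \<le> u)"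

definition order_complete :: "'a::order itself \<Rightarrow> bool" where
  "order_complete _ \<longleftrightarrow> (\<forall>A::'a set. A \<noteq> {} \<longrightarrow> bdd_above A \<longrightarrow> (\<exists>s. is_sup A s))"

definition vl_disjoint :: "'a::{lattice,ab_group_add} \<Rightarrow> 'a \<Rightarrow> bool" where
  "vl_disjoint x y \<longleftrightarrow> inf (vl_abs x) (vl_abs y) = 0"

definition vl_ideal :: "'a::{ordered_real_vector,lattice} set \<Rightarrow> bool" where
  "vl_ideal B \<longleftrightarrow> 0 \<in> B \<and> (\<forall>x\<in>B. \<forall>y\<in>B. x + y \<in> B) \<and> (\<forall>c. \<forall>x\<in>B. c *\<^sub>R x \<in> B)
     \<and> (\<forall>x y. y \<in> B \<longrightarrow> vl_abs x \<le> vl_abs y \<longrightarrow> x \<in> B)"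

definition vl_band :: "'a::{ordered_real_vector,lattice} set \<Rightarrow> bool" where
  "vl_band B \<longleftrightarrow> vl_ideal B \<and> (\<forall>A s. A \<subseteq> B \<longrightarrow> is_sup A s \<longrightarrow> s \<in> B)"

definition weak_unit :: "'a::{ordered_real_vector,lattice} set \<Rightarrow> 'a \<Rightarrow> bool" where
  "weak_unit B u \<longleftrightarrow> u \<in> B \<and> 0 \<le> u \<and> (\<forall>z\<in>B. inf (vl_abs z) u = 0 \<longrightarrow> z = 0)"

definition generated_ideal :: "'a::{ordered_real_vector,lattice} set \<Rightarrow> 'a \<Rightarrow> 'a set" where
  "generated_ideal B u = {z \<in> B. \<exists>c. vl_abs z \<le> c *\<^sub>R vl_abs u}"

text \<open>An element of S(X) is represented by a pair (U, f): U open dense, f continuous on U.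
  Two representatives denote the same element iff they agree on the intersection of domains.\<close>

type_synonym 'x sfun = "'x set \<times> ('x \<Rightarrow> real)"

definition S_elem :: "'x topology \<Rightarrow> 'x sfun \<Rightarrow> bool" where
  "S_elem X a \<longleftrightarrow> openin X (fst a) \<and> X closure_of (fst a) = topspace X
     \<and> continuous_map (subtopology X (fst a)) euclideanreal (snd a)"

definition S_eq :: "'x sfun \<Rightarrow> 'x sfun \<Rightarrow> bool" where
  "S_eq a b \<longleftrightarrow> (\<forall>p \<in> fst a \<inter> fst b. snd a p = snd b p)"

definition S_le :: "'x sfun \<Rightarrow> 'x sfun \<Rightarrow> bool" where
  "S_le a b \<longleftrightarrow> (\<forall>p \<in> fst a \<inter> fst b. snd a p \<le> snd b p)"

definition S_add :: "'x sfun \<Rightarrow> 'x sfun \<Rightarrow> 'x sfun" where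
  "S_add a b = (fst a \<inter> fst b, \<lambda>p. snd a p + snd b p)"

definition S_scale :: "real \<Rightarrow> 'x sfun \<Rightarrow> 'x sfun" where
  "S_scale c a = (fst a, \<lambda>p. c * snd a p)"

definition S_sup :: "'x sfun \<Rightarrow> 'x sfun \<Rightarrow> 'x sfun" where
  "S_sup a b = (fst a \<inter> fst b, \<lambda>p. max (snd a p) (snd b p))"

definition S_abs :: "'x sfun \<Rightarrow> 'x sfun" where
  "S_abs a = (fst a, \<lambda>p. \<bar>snd a p\<bar>)"

definition S_one :: "'x topology \<Rightarrow> 'x sfun" where
  "S_one X = (topspace X, \<lambda>_. 1)"

definition S_inj_lattice_hom ::
  "'x topology \<Rightarrow> 'a::{ordered_real_vector,lattice} set \<Rightarrow> ('a \<Rightarrow> 'x sfun) \<Rightarrow> bool" where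
  "S_inj_lattice_hom X B T \<longleftrightarrow>
     (\<forall>x\<in>B. S_elem X (T x))
   \<and> (\<forall>x\<in>B. \<forall>y\<in>B. S_eq (T (x + y)) (S_add (T x) (T y)))
   \<and> (\<forall>c. \<forall>x\<in>B. S_eq (T (c *\<^sub>R x)) (S_scale c (T x)))
   \<and> (\<forall>x\<in>B. \<forall>y\<in>B. S_eq (T (sup x y)) (S_sup (T x) (T y)))
   \<and> (\<forall>x\<in>B. \<forall>y\<in>B. S_eq (T x) (T y) \<longrightarrow> x = y)"

definition sup_closure_is_C :: "'x topology \<Rightarrow> ('a \<Rightarrow> 'x sfun) \<Rightarrow> 'a set \<Rightarrow> bool" where
  "sup_closure_is_C X T I \<longleftrightarrow>
     (\<forall>z\<in>I. \<exists>g. continuous_map X euclideanreal g \<and> S_eq (T z) (topspace X, g))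
   \<and> (\<forall>g. continuous_map X euclideanreal g \<longrightarrow>
        (\<forall>\<epsilon>>0. \<exists>z\<in>I. \<exists>h. continuous_map X euclideanreal h \<and> S_eq (T z) (topspace X, h)
             \<and> (\<forall>p\<in>topspace X. \<bar>g p - h p\<bar> < \<epsilon>)))"

section \<open>S(X) for X the disjoint union of X_\<alpha>, \<alpha> \<in> I, identified with the product\<close>

definition Sp_elem :: "('i \<Rightarrow> 'x topology) \<Rightarrow> 'i set \<Rightarrow> ('i \<Rightarrow> 'x sfun) \<Rightarrow> bool" where
  "Sp_elem X I F \<longleftrightarrow> (\<forall>\<alpha>\<in>I. S_elem (X \<alpha>) (F \<alpha>))"

definition Sp_eq :: "'i set \<Rightarrow> ('i \<Rightarrow> 'x sfun) \<Rightarrow> ('i \<Rightarrow> 'x sfun) \<Rightarrow> bool" where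
  "Sp_eq I F G \<longleftrightarrow> (\<forall>\<alpha>\<in>I. S_eq (F \<alpha>) (G \<alpha>))"

definition Sp_le :: "'i set \<Rightarrow> ('i \<Rightarrow> 'x sfun) \<Rightarrow> ('i \<Rightarrow> 'x sfun) \<Rightarrow> bool" where
  "Sp_le I F G \<longleftrightarrow> (\<forall>\<alpha>\<in>I. S_le (F \<alpha>) (G \<alpha>))"

definition Sp_add :: "('i \<Rightarrow> 'x sfun) \<Rightarrow> ('i \<Rightarrow> 'x sfun) \<Rightarrow> ('i \<Rightarrow> 'x sfun)" where
  "Sp_add F G = (\<lambda>\<alpha>. S_add (F \<alpha>) (G \<alpha>))"

definition Sp_scale :: "real \<Rightarrow> ('i \<Rightarrow> 'x sfun) \<Rightarrow> ('i \<Rightarrow> 'x sfun)" where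
  "Sp_scale c F = (\<lambda>\<alpha>. S_scale c (F \<alpha>))"

definition Sp_abs :: "('i \<Rightarrow> 'x sfun) \<Rightarrow> ('i \<Rightarrow> 'x sfun)" where
  "Sp_abs F = (\<lambda>\<alpha>. S_abs (F \<alpha>))"

definition Sp_ideal :: "('i \<Rightarrow> 'x topology) \<Rightarrow> 'i set \<Rightarrow> ('i \<Rightarrow> 'x sfun) set \<Rightarrow> bool" where
  "Sp_ideal X I J \<longleftrightarrow>
     (\<forall>F\<in>J. Sp_elem X I F) \<and> J \<noteq> {}
   \<and> (\<forall>F\<in>J. \<forall>G\<in>J. \<exists>H\<in>J. Sp_eq I H (Sp_add F G))
   \<and> (\<forall>c. \<forall>F\<in>J. \<exists>H\<in>J. Sp_eq I H (Sp_scale c F))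
   \<and> (\<forall>F\<in>J. \<forall>G. Sp_elem X I G \<longrightarrow> Sp_le I (Sp_abs G) (Sp_abs F) \<longrightarrow> (\<exists>H\<in>J. Sp_eq I H G))"

end

theory Submission
  imports Defs
begin

lemma vl_add_inf_distrib_left:
  fixes a b c :: "'e::{ordered_real_vector,lattice}"
  shows "a + inf b c = inf (a + b) (a + c)"
proof (rule antisym)
  show "a + inf b c \<le> inf (a + b) (a + c)" by (simp add: add_left_mono)
  have "- a + inf (a + b) (a + c) \<le> b"
    using add_left_mono[OF inf_le1[of "a+b" "a+c"], of "-a"] by (simp add: add.assoc[symmetric])
  moreover have "- a + inf (a + b) (a + c) \<le> c"
    using add_left_mono[OF inf_le2[of "a+b" "a+c"], of "-a"] by (simp add: add.assoc[symmetric])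
  ultimately have "- a + inf (a + b) (a + c) \<le> inf b c" by simp
  then have "a + (- a + inf (a + b) (a + c)) \<le> a + inf b c" by (rule add_left_mono)
  then show "inf (a + b) (a + c) \<le> a + inf b c" by (simp add: add.assoc[symmetric])
qed

lemma vl_add_sup_distrib_left:
  fixes a b c :: "'e::{ordered_real_vector,lattice}"
  shows "a + sup b c = sup (a + b) (a + c)"
proof (rule antisym)
  show "sup (a + b) (a + c) \<le> a + sup b c" by (simp add: add_left_mono)
  have "b \<le> - a + sup (a + b) (a + c)"
    using add_left_mono[OF sup_ge1[of "a+b" "a+c"], of "-a"] by (simp add: add.assoc[symmetric])
  moreover have "c \<le> - a + sup (a + b) (a + c)"
    using add_left_mono[OF sup_ge2[of "a+c" "a+b"], of "-a"] by (simp add: add.assoc[symmetric] sup_commute)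
  ultimately have "sup b c \<le> - a + sup (a + b) (a + c)" by simp
  then have "a + sup b c \<le> a + (- a + sup (a + b) (a + c))" by (rule add_left_mono)
  then show "a + sup b c \<le> sup (a + b) (a + c)" by (simp add: add.assoc[symmetric])
qed

lemma vl_neg_sup:
  fixes a b :: "'e::{ordered_real_vector,lattice}"
  shows "- sup a b = inf (- a) (- b)"
proof (rule antisym)
  show "- sup a b \<le> inf (- a) (- b)" by simp
  have "inf (- a) (- b) \<le> - a" "inf (- a) (- b) \<le> - b" by simp_all
  then have "a \<le> - inf (- a) (- b)" "b \<le> - inf (- a) (- b)"
    by (simp_all add: le_minus_iff)
  then have "sup a b \<le> - inf (- a) (- b)" by simp
  then show "inf (- a) (- b) \<le> - sup a b" by (simp add: le_minus_iff)
qed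

lemma vl_inf_eq_neg_sup:
  fixes a b :: "'e::{ordered_real_vector,lattice}"
  shows "inf a b = - sup (- a) (- b)"
  by (simp add: vl_neg_sup)

lemma vl_inf_sup_add:
  fixes a b :: "'e::{ordered_real_vector,lattice}"
  shows "inf a b + sup a b = a + b"
proof -
  have "inf a b + sup a b = sup (inf a b + a) (inf a b + b)" by (rule vl_add_sup_distrib_left)
  also have "inf a b + a = inf (a + a) (b + a)"
    using vl_add_inf_distrib_left[of a a b] by (simp add: add.commute)
  also have "inf a b + b = inf (a + b) (b + b)"
    using vl_add_inf_distrib_left[of b a b] by (simp add: add.commute)
  finally have e: "inf a b + sup a b = sup (inf (a + a) (b + a)) (inf (a + b) (b + b))" .
  have "sup (inf (a + a) (b + a)) (inf (a + b) (b + b)) \<le> a + b"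
    by (simp add: add.commute le_supI1 le_supI2)
  moreover have "a + b \<le> inf a b + sup a b"
  proof -
    have "a + b - sup a b \<le> a" 
      by (simp add: add_le_cancel_left diff_le_eq)
    moreover have "a + b - sup a b \<le> b"
      by (simp add: diff_le_eq add.commute add_left_mono)
    ultimately have "a + b - sup a b \<le> inf a b" by simp
    then show ?thesis by (metis diff_le_eq)
  qed
  ultimately show ?thesis using e antisym by metis
qed

lemma vl_abs_nonneg:
  fixes a :: "'e::{ordered_real_vector,lattice}"
  shows "0 \<le> vl_abs a"
proof -
  have "a + (- a) \<le> vl_abs a + vl_abs a"
    unfolding vl_abs_def by (rule add_mono) simp_all
  then have "0 \<le> (2::real) *\<^sub>R vl_abs a" by (simp add: scaleR_2)
  then have "0 \<le> (1/2::real) *\<^sub>R ((2::real) *\<^sub>R vl_abs a)" by (rule scaleR_nonneg_nonneg[rotated]) simp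
  then show ?thesis by simp
qed

lemma vl_abs_of_nonneg:
  fixes a :: "'e::{ordered_real_vector,lattice}"
  shows "0 \<le> a \<Longrightarrow> vl_abs a = a"
  unfolding vl_abs_def by (rule sup_absorb1) (simp add: order_trans[of "-a" 0 a])

lemma vl_abs_ge: fixes a :: "'e::{ordered_real_vector,lattice}"
  shows "a \<le> vl_abs a" "- a \<le> vl_abs a"
  unfolding vl_abs_def by simp_all

lemma vl_abs_minus: fixes a :: "'e::{ordered_real_vector,lattice}"
  shows "vl_abs (- a) = vl_abs a"
  unfolding vl_abs_def by (simp add: sup_commute)

lemma vl_abs_le: fixes a :: "'e::{ordered_real_vector,lattice}"
  shows "vl_abs a \<le> c \<longleftrightarrow> a \<le> c \<and> - a \<le> c"
  unfolding vl_abs_def by simp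

lemma vl_abs_triangle: fixes a b :: "'e::{ordered_real_vector,lattice}"
  shows "vl_abs (a + b) \<le> vl_abs a + vl_abs b"
  unfolding vl_abs_le using add_mono[OF vl_abs_ge(1)[of a] vl_abs_ge(1)[of b]]
     add_mono[OF vl_abs_ge(2)[of a] vl_abs_ge(2)[of b]]
  by (simp add: add.commute)

lemma vl_inf_add_le:
  fixes a b c :: "'e::{ordered_real_vector,lattice}"
  assumes "0 \<le> a" "0 \<le> b" "0 \<le> c"
  shows "inf (a + b) c \<le> inf a c + inf b c"
proof -
  have "inf a c + inf b c = inf (inf a c + b) (inf a c + c)" by (rule vl_add_inf_distrib_left)
  also have "inf a c + b = inf (a + b) (c + b)"
    using vl_add_inf_distrib_left[of b a c] by (simp add: add.commute)
  also have "inf a c + c = inf (a + c) (c + c)"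
    using vl_add_inf_distrib_left[of c a c] by (simp add: add.commute)
  finally have e: "inf a c + inf b c = inf (inf (a + b) (c + b)) (inf (a + c) (c + c))" .
  have "c \<le> c + b" "c \<le> a + c" "c \<le> c + c" using assms
    by (simp_all add: add_increasing add_increasing2)
  then have "inf (a + b) c \<le> inf (inf (a + b) (c + b)) (inf (a + c) (c + c))"
    by (simp add: le_infI2)
  then show ?thesis using e by simp
qed

lemma vl_scale_sup:
  fixes a b :: "'e::{ordered_real_vector,lattice}"
  assumes "0 \<le> k"
  shows "k *\<^sub>R sup a b = sup (k *\<^sub>R a) (k *\<^sub>R b)"
proof (cases "k = 0")
  case True then show ?thesis by simp
next
  case False
  with assms have k: "0 < k" by simp
  show ?thesis
  proof (rule antisym)
    show "sup (k *\<^sub>R a) (k *\<^sub>R b) \<le> k *\<^sub>R sup a b"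
      using assms by (simp add: scaleR_left_mono)
    have "a \<le> (1/k) *\<^sub>R sup (k *\<^sub>R a) (k *\<^sub>R b)"
      using scaleR_left_mono[OF sup_ge1[of "k *\<^sub>R a" "k *\<^sub>R b"], of "1/k"] k by simp
    moreover have "b \<le> (1/k) *\<^sub>R sup (k *\<^sub>R a) (k *\<^sub>R b)"
      using scaleR_left_mono[OF sup_ge2[of "k *\<^sub>R b" "k *\<^sub>R a"], of "1/k"] k by simp
    ultimately have "sup a b \<le> (1/k) *\<^sub>R sup (k *\<^sub>R a) (k *\<^sub>R b)" by simp
    then have "k *\<^sub>R sup a b \<le> k *\<^sub>R ((1/k) *\<^sub>R sup (k *\<^sub>R a) (k *\<^sub>R b))"
      using assms by (rule scaleR_left_mono)
    then show "k *\<^sub>R sup a b \<le> sup (k *\<^sub>R a) (k *\<^sub>R b)" using k by simp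
  qed
qed

lemma vl_abs_scale:
  fixes a :: "'e::{ordered_real_vector,lattice}"
  shows "vl_abs (k *\<^sub>R a) = \<bar>k\<bar> *\<^sub>R vl_abs a"
proof (cases "0 \<le> k")
  case True
  then show ?thesis unfolding vl_abs_def by (simp add: vl_scale_sup)
next
  case False
  have "vl_abs (k *\<^sub>R a) = vl_abs (- (k *\<^sub>R a))" by (simp only: vl_abs_minus)
  also have "- (k *\<^sub>R a) = (-k) *\<^sub>R a" by simp
  also have "vl_abs ((-k) *\<^sub>R a) = (-k) *\<^sub>R vl_abs a"
    unfolding vl_abs_def using False by (simp only: vl_scale_sup[of "-k" a "-a"] scaleR_minus_right not_le neg_0_le_iff_le less_imp_le)
  finally have "vl_abs (k *\<^sub>R a) = (-k) *\<^sub>R vl_abs a" .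
  then show ?thesis using False by simp
qed


lemma vl_inf_abs_nonneg: fixes a c :: "'e::{ordered_real_vector,lattice}"
  shows "0 \<le> inf (vl_abs a) (vl_abs c)"
  by (simp add: vl_abs_nonneg)

lemma vl_disjoint_sym: "vl_disjoint a c \<Longrightarrow> vl_disjoint c a"
  unfolding vl_disjoint_def by (simp add: inf_commute)

lemma vl_disjoint_add:
  fixes p q c :: "'e::{ordered_real_vector,lattice}"
  assumes "vl_disjoint p c" "vl_disjoint q c"
  shows "vl_disjoint (p + q) c"
proof -
  have "inf (vl_abs (p + q)) (vl_abs c) \<le> inf (vl_abs p + vl_abs q) (vl_abs c)"
    using vl_abs_triangle[of p q] by (simp add: le_infI1)
  also have "\<dots> \<le> inf (vl_abs p) (vl_abs c) + inf (vl_abs q) (vl_abs c)"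
    by (rule vl_inf_add_le) (simp_all add: vl_abs_nonneg)
  also have "\<dots> = 0" using assms unfolding vl_disjoint_def by simp
  finally show ?thesis unfolding vl_disjoint_def
    using vl_inf_abs_nonneg[of "p+q" c] by (simp add: antisym)
qed

lemma vl_disjoint_minus:
  fixes p c :: "'e::{ordered_real_vector,lattice}"
  shows "vl_disjoint (- p) c \<longleftrightarrow> vl_disjoint p c"
  unfolding vl_disjoint_def by (simp add: vl_abs_minus)

lemma vl_disjoint_diff:
  fixes p q c :: "'e::{ordered_real_vector,lattice}"
  assumes "vl_disjoint p c" "vl_disjoint q c"
  shows "vl_disjoint (p - q) c"
  using vl_disjoint_add[OF assms(1), of "-q"] assms(2) vl_disjoint_minus[of q c] by simp

lemma vl_scale_inf:
  fixes a b :: "'e::{ordered_real_vector,lattice}"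
  assumes "0 \<le> k"
  shows "k *\<^sub>R inf a b = inf (k *\<^sub>R a) (k *\<^sub>R b)"
  using vl_scale_sup[OF assms, of "-a" "-b"] by (simp add: vl_inf_eq_neg_sup)

lemma vl_inf_scale_zero:
  fixes A C :: "'e::{ordered_real_vector,lattice}"
  assumes A: "0 \<le> A" and C: "0 \<le> C" and z: "inf A C = 0" and m: "0 \<le> m"
  shows "inf (m *\<^sub>R A) C = 0"
proof (rule antisym)
  show "0 \<le> inf (m *\<^sub>R A) C" using A C m by (simp add: scaleR_nonneg_nonneg)
  show "inf (m *\<^sub>R A) C \<le> 0"
  proof (cases "m \<le> 1")
    case True
    have "0 \<le> (1 - m) *\<^sub>R A" using True A by (simp add: scaleR_nonneg_nonneg)
    then have "m *\<^sub>R A \<le> A" by (simp add: scaleR_diff_left)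
    then have "inf (m *\<^sub>R A) C \<le> inf A C" by (simp add: le_infI1)
    then show ?thesis using z by simp
  next
    case False
    have "0 \<le> (m - 1) *\<^sub>R C" using False C by (simp add: scaleR_nonneg_nonneg)
    then have "C \<le> m *\<^sub>R C" by (simp add: scaleR_diff_left)
    then have "inf (m *\<^sub>R A) C \<le> inf (m *\<^sub>R A) (m *\<^sub>R C)" by (simp add: le_infI2)
    also have "\<dots> = m *\<^sub>R inf A C" using m by (simp add: vl_scale_inf)
    finally show ?thesis using z by simp
  qed
qed

lemma vl_disjoint_scale:
  fixes p c :: "'e::{ordered_real_vector,lattice}"
  assumes "vl_disjoint p c"
  shows "vl_disjoint (k *\<^sub>R p) c"
  using assms unfolding vl_disjoint_def vl_abs_scale
  by (intro vl_inf_scale_zero) (simp_all add: vl_abs_nonneg)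

lemma vl_disjoint_nonneg:
  fixes a c :: "'e::{ordered_real_vector,lattice}"
  assumes "0 \<le> a" "0 \<le> c"
  shows "vl_disjoint a c \<longleftrightarrow> inf a c = 0"
  unfolding vl_disjoint_def using assms by (simp add: vl_abs_of_nonneg)

lemma vl_sup_inf_bound:
  fixes s c v :: "'e::{ordered_real_vector,lattice}"
  assumes sup: "is_sup P s" and bd: "\<And>p. p \<in> P \<Longrightarrow> inf p c \<le> v"
  shows "inf s c \<le> v"
proof -
  have "\<forall>p\<in>P. p \<le> v + sup s c - c"
  proof
    fix p assume p: "p \<in> P"
    have "p + c = inf p c + sup p c" using vl_inf_sup_add[of p c] by simp
    also have "\<dots> \<le> v + sup s c"
      using bd[OF p] sup p unfolding is_sup_def
      by (intro add_mono) (auto intro: le_supI1)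
    finally show "p \<le> v + sup s c - c" by (simp add: le_diff_eq)
  qed
  then have "s \<le> v + sup s c - c" using sup unfolding is_sup_def by blast
  then have "s + c \<le> v + sup s c" by (simp add: le_diff_eq)
  then have "inf s c + sup s c \<le> v + sup s c" using vl_inf_sup_add[of s c] by simp
  then show ?thesis by simp
qed


lemma dense_meet:
  assumes "X closure_of D = topspace X" "openin X S" "S \<noteq> {}"
  shows "\<exists>q\<in>S. q \<in> D"
  using assms dense_intersects_open by blast

lemma dense_open_Int:
  assumes "openin X A" "X closure_of A = topspace X" "X closure_of B = topspace X"
  shows "X closure_of (A \<inter> B) = topspace X"
  unfolding dense_intersects_open
proof (intro allI impI)
  fix T assume T: "openin X T \<and> T \<noteq> {}"
  then have "A \<inter> T \<noteq> {}" using assms(2) dense_intersects_open by blast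
  moreover have "openin X (A \<inter> T)" using T assms(1) by blast
  ultimately have "B \<inter> (A \<inter> T) \<noteq> {}" using assms(3) dense_intersects_open by blast
  then show "A \<inter> B \<inter> T \<noteq> {}" by blast
qed

lemma open_less:
  assumes U: "openin X U"
    and f: "continuous_map (subtopology X U) euclideanreal f"
    and g: "continuous_map (subtopology X U) euclideanreal g"
  shows "openin X {q\<in>U. f q < g q}"
proof -
  have h: "continuous_map (subtopology X U) euclideanreal (\<lambda>q. g q - f q)"
    using f g by (rule continuous_map_diff[rotated])
  have "openin (subtopology X U) {q \<in> topspace (subtopology X U). g q - f q \<in> {0<..}}"
    by (rule openin_continuous_map_preimage[OF h]) simp
  moreover have "{q \<in> topspace (subtopology X U). g q - f q \<in> {0<..}} = {q\<in>U. f q < g q}"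
    using openin_subset[OF U] by auto
  ultimately show ?thesis using U openin_trans_full by metis
qed

lemma open_less_const:
  assumes U: "openin X U"
    and f: "continuous_map (subtopology X U) euclideanreal f"
  shows "openin X {q\<in>U. f q < c}" "openin X {q\<in>U. c < f q}"
  using open_less[OF U f, of "\<lambda>_. c"] open_less[OF U _ f, of "\<lambda>_. c"] by auto

lemma le_extend:
  assumes U: "openin X U"
    and f: "continuous_map (subtopology X U) euclideanreal f"
    and g: "continuous_map (subtopology X U) euclideanreal g"
    and D: "X closure_of D = topspace X"
    and le: "\<And>q. q \<in> U \<Longrightarrow> q \<in> D \<Longrightarrow> f q \<le> g q"
  shows "\<And>q. q \<in> U \<Longrightarrow> f q \<le> g q"
proof (rule ccontr)
  fix q assume q: "q \<in> U" "\<not> f q \<le> g q"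
  have "openin X {q\<in>U. g q < f q}" by (rule open_less[OF U g f])
  moreover have "{q\<in>U. g q < f q} \<noteq> {}" using q by auto
  ultimately obtain r where "r \<in> {q\<in>U. g q < f q}" "r \<in> D" using dense_meet[OF D] by blast
  then show False using le by force
qed

lemma eq_extend:
  assumes U: "openin X U"
    and f: "continuous_map (subtopology X U) euclideanreal f"
    and g: "continuous_map (subtopology X U) euclideanreal g"
    and D: "X closure_of D = topspace X"
    and eq: "\<And>q. q \<in> U \<Longrightarrow> q \<in> D \<Longrightarrow> f q = g q"
  shows "\<And>q. q \<in> U \<Longrightarrow> f q = g q"
  using le_extend[OF U f g D] le_extend[OF U g f D] eq by (metis order_refl antisym)

lemma bump:
  assumes cpt: "compact_space X" and hd: "Hausdorff_space X"
    and N: "openin X N" and p: "p \<in> N"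
  obtains \<phi> where "continuous_map X euclideanreal \<phi>" "\<phi> p = 1"
    "\<And>q. q \<in> topspace X \<Longrightarrow> 0 \<le> \<phi> q \<and> \<phi> q \<le> 1"
    "\<And>q. q \<in> topspace X \<Longrightarrow> q \<notin> N \<Longrightarrow> \<phi> q = 0"
proof -
  have cr: "completely_regular_space X"
    using normal_imp_completely_regular_space compact_Hausdorff_or_regular_imp_normal_space cpt hd by blast
  have "closedin X (topspace X - N)" using N by blast
  moreover have "p \<in> topspace X - (topspace X - N)" using N p openin_subset by fastforce
  ultimately obtain f :: "_ \<Rightarrow> real" where f: "continuous_map X (top_of_set {0..1}) f"
    "f p = 0" "f ` (topspace X - N) \<subseteq> {1}"
    using cr unfolding completely_regular_space_def by metis
  have fc: "continuous_map X euclideanreal f"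
    using f(1) continuous_map_into_fulltopology by blast
  have fr: "\<And>q. q \<in> topspace X \<Longrightarrow> f q \<in> {0..1}"
    using f(1) continuous_map_image_subset_topspace by fastforce
  show ?thesis
  proof (rule that[of "\<lambda>q. 1 - f q"])
    show "continuous_map X euclideanreal (\<lambda>q. 1 - f q)"
      using fc by (intro continuous_map_diff) auto
  qed (use f fr in auto)
qed


locale band_rep =
  fixes X :: "'x topology" and B :: "'e::{ordered_real_vector,lattice} set"
    and u :: 'e and T :: "'e \<Rightarrow> 'x sfun"
  assumes complete: "order_complete TYPE('e)"
    and band: "vl_band B"
    and unit: "weak_unit B u"
    and cpt: "compact_space X" and hd: "Hausdorff_space X"
    and hom: "S_inj_lattice_hom X B T"
    and one: "S_eq (T u) (S_one X)"
    and dense: "sup_closure_is_C X T (generated_ideal B u)"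
begin

abbreviation D where "D a \<equiv> fst (T a)"
abbreviation V where "V a \<equiv> snd (T a)"

lemma ideal: "vl_ideal B" using band unfolding vl_band_def by blast

lemma ideal_parts: "0 \<in> B" "\<forall>x\<in>B. \<forall>y\<in>B. x + y \<in> B" "\<forall>c. \<forall>x\<in>B. c *\<^sub>R x \<in> B"
     "\<forall>x y. y \<in> B \<longrightarrow> vl_abs x \<le> vl_abs y \<longrightarrow> x \<in> B"
  using ideal unfolding vl_ideal_def by blast+

lemma B_zero: "0 \<in> B" by (rule ideal_parts(1))
lemma B_add: "a \<in> B \<Longrightarrow> b \<in> B \<Longrightarrow> a + b \<in> B" using ideal_parts(2) by blast
lemma B_scale: "a \<in> B \<Longrightarrow> c *\<^sub>R a \<in> B" using ideal_parts(3) by blast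
lemma B_solid: "b \<in> B \<Longrightarrow> vl_abs a \<le> vl_abs b \<Longrightarrow> a \<in> B" using ideal_parts(4) by blast
lemma B_minus: "a \<in> B \<Longrightarrow> - a \<in> B" using B_scale[of a "-1"] by simp
lemma B_diff: "a \<in> B \<Longrightarrow> b \<in> B \<Longrightarrow> a - b \<in> B" using B_add[OF _ B_minus, of a b] by simp
lemma B_abs: "a \<in> B \<Longrightarrow> vl_abs a \<in> B"
  by (erule B_solid) (simp add: vl_abs_of_nonneg vl_abs_nonneg)
lemma B_sup: assumes "a \<in> B" "b \<in> B" shows "sup a b \<in> B"
proof -
  have "vl_abs (sup a b) \<le> vl_abs a + vl_abs b"
    unfolding vl_abs_le
  proof
    show "sup a b \<le> vl_abs a + vl_abs b"
      using vl_abs_ge(1)[of a] vl_abs_ge(1)[of b] vl_abs_nonneg[of a] vl_abs_nonneg[of b]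
      by (simp add: add_increasing add_increasing2)
    have "- sup a b \<le> - a" by simp
    also have "\<dots> \<le> vl_abs a + vl_abs b"
      using vl_abs_ge(2)[of a] vl_abs_nonneg[of b] by (simp add: add_increasing2)
    finally show "- sup a b \<le> vl_abs a + vl_abs b" .
  qed
  also have "\<dots> = vl_abs (vl_abs a + vl_abs b)"
    by (simp add: vl_abs_of_nonneg vl_abs_nonneg)
  finally have le: "vl_abs (sup a b) \<le> vl_abs (vl_abs a + vl_abs b)" .
  have "vl_abs a + vl_abs b \<in> B" using assms by (intro B_add B_abs)
  from this le show ?thesis by (rule B_solid)
qed
lemma B_inf: "a \<in> B \<Longrightarrow> b \<in> B \<Longrightarrow> inf a b \<in> B"
  unfolding vl_inf_eq_neg_sup[of a b] by (intro B_minus B_sup)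

lemma B_u: "u \<in> B" and u_nonneg: "0 \<le> u" using unit unfolding weak_unit_def by blast+

lemma elem: assumes "a \<in> B"
  shows "openin X (D a)" "X closure_of (D a) = topspace X"
    "continuous_map (subtopology X (D a)) euclideanreal (V a)"
proof -
  have "\<forall>x\<in>B. S_elem X (T x)" using hom unfolding S_inj_lattice_hom_def by (rule conjunct1)
  then have "S_elem X (T a)" using assms by blast
  then show "openin X (D a)" "X closure_of (D a) = topspace X"
    "continuous_map (subtopology X (D a)) euclideanreal (V a)"
    unfolding S_elem_def by blast+
qed

lemma D_sub: "a \<in> B \<Longrightarrow> D a \<subseteq> topspace X"
  by (rule openin_subset[OF elem(1)])

lemma hom_all:
  "(\<forall>x\<in>B. S_elem X (T x))
   \<and> (\<forall>x\<in>B. \<forall>y\<in>B. S_eq (T (x + y)) (S_add (T x) (T y)))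
   \<and> (\<forall>c. \<forall>x\<in>B. S_eq (T (c *\<^sub>R x)) (S_scale c (T x)))
   \<and> (\<forall>x\<in>B. \<forall>y\<in>B. S_eq (T (sup x y)) (S_sup (T x) (T y)))
   \<and> (\<forall>x\<in>B. \<forall>y\<in>B. S_eq (T x) (T y) \<longrightarrow> x = y)"
  using hom unfolding S_inj_lattice_hom_def .

lemmas hom_parts = hom_all[THEN conjunct2, THEN conjunct1]
  hom_all[THEN conjunct2, THEN conjunct2, THEN conjunct1]
  hom_all[THEN conjunct2, THEN conjunct2, THEN conjunct2, THEN conjunct1]
  hom_all[THEN conjunct2, THEN conjunct2, THEN conjunct2, THEN conjunct2]

lemma V_add: assumes "a \<in> B" "b \<in> B" "p \<in> D (a + b)" "p \<in> D a" "p \<in> D b"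
  shows "V (a + b) p = V a p + V b p"
proof -
  have "S_eq (T (a + b)) (S_add (T a) (T b))" using hom_parts(1) assms(1,2) by blast
  then show ?thesis using assms(3-5) unfolding S_eq_def S_add_def by simp
qed

lemma V_scale: assumes "a \<in> B" "p \<in> D (c *\<^sub>R a)" "p \<in> D a"
  shows "V (c *\<^sub>R a) p = c * V a p"
proof -
  have "S_eq (T (c *\<^sub>R a)) (S_scale c (T a))" using hom_parts(2) assms(1) by blast
  then show ?thesis using assms(2-3) unfolding S_eq_def S_scale_def by simp
qed

lemma V_sup: assumes "a \<in> B" "b \<in> B" "p \<in> D (sup a b)" "p \<in> D a" "p \<in> D b"
  shows "V (sup a b) p = max (V a p) (V b p)"
proof -
  have "S_eq (T (sup a b)) (S_sup (T a) (T b))" using hom_parts(3) assms(1,2) by blast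
  then show ?thesis using assms(3-5) unfolding S_eq_def S_sup_def by simp
qed

lemma T_inj: "a \<in> B \<Longrightarrow> b \<in> B \<Longrightarrow> S_eq (T a) (T b) \<Longrightarrow> a = b"
  using hom_parts(4) by blast

lemma V_zero: assumes "p \<in> D 0" shows "V 0 p = 0"
proof -
  have "V ((0::real) *\<^sub>R 0) p = 0 * V 0 p" using assms by (intro V_scale B_zero) simp_all
  then show ?thesis by simp
qed

lemma V_u: assumes "p \<in> D u" shows "V u p = 1"
proof -
  have "p \<in> topspace X" using assms D_sub[OF B_u] by blast
  then show ?thesis using one assms unfolding S_eq_def S_one_def by simp
qed

lemma V_minus: assumes "a \<in> B" "p \<in> D (- a)" "p \<in> D a" shows "V (- a) p = - V a p"
proof -
  have "V ((-1) *\<^sub>R a) p = (-1) * V a p" using assms by (intro V_scale) simp_all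
  then show ?thesis by simp
qed

definition DD :: "'e set \<Rightarrow> 'x set" where
  "DD F = topspace X \<inter> (\<Inter>a\<in>F. D a)"

lemma DD_mem: "q \<in> DD F \<longleftrightarrow> q \<in> topspace X \<and> (\<forall>a\<in>F. q \<in> D a)"
  unfolding DD_def by blast

lemma DD_props: assumes "finite F" "F \<subseteq> B"
  shows "openin X (DD F) \<and> X closure_of (DD F) = topspace X"
  using assms
proof (induction F rule: finite_induct)
  case empty
  then show ?case by (simp add: DD_def)
next
  case (insert a F)
  have e: "DD (insert a F) = D a \<inter> DD F" unfolding DD_def using D_sub[of a] insert by auto
  show ?case unfolding e using insert elem[of a] dense_open_Int[of X "D a" "DD F"] by auto
qed

lemma ext:
  assumes a: "a \<in> B" and U: "openin X U" "U \<subseteq> D a"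
    and f: "continuous_map (subtopology X U) euclideanreal f"
    and E: "X closure_of E = topspace X"
    and eq: "\<And>q. q \<in> U \<Longrightarrow> q \<in> E \<Longrightarrow> V a q = f q"
  shows "\<And>q. q \<in> U \<Longrightarrow> V a q = f q"
  using eq_extend[OF U(1) continuous_map_from_subtopology_mono[OF elem(3)[OF a] U(2)] f E] eq by blast

lemma cont_on: "a \<in> B \<Longrightarrow> U \<subseteq> D a \<Longrightarrow> continuous_map (subtopology X U) euclideanreal (V a)"
  using continuous_map_from_subtopology_mono elem(3) by blast

lemma V_inf: assumes a: "a \<in> B" and b: "b \<in> B"
  shows "p \<in> D (inf a b) \<Longrightarrow> p \<in> D a \<Longrightarrow> p \<in> D b \<Longrightarrow> V (inf a b) p = min (V a p) (V b p)"
proof -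
  let ?U = "D (inf a b) \<inter> D a \<inter> D b"
  have U: "openin X ?U" using elem(1) B_inf a b by blast
  have f: "continuous_map (subtopology X ?U) euclideanreal (\<lambda>q. min (V a q) (V b q))"
    by (intro continuous_map_real_min cont_on a b) auto
  let ?F = "{- a, - b, sup (- a) (- b)}"
  have F: "finite ?F" "?F \<subseteq> B" using a b by (auto intro: B_minus B_sup)
  have "\<And>q. q \<in> ?U \<Longrightarrow> V (inf a b) q = min (V a q) (V b q)"
  proof (rule ext[OF B_inf[OF a b] U _ f DD_props[OF F, THEN conjunct2]])
    fix q assume q: "q \<in> ?U" "q \<in> DD ?F"
    then have q2: "q \<in> D (- a)" "q \<in> D (- b)" "q \<in> D (sup (- a) (- b))"
      unfolding DD_mem by auto
    have "V (inf a b) q = V (- sup (- a) (- b)) q" by (simp add: vl_inf_eq_neg_sup[of a b])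
    also have "\<dots> = - V (sup (- a) (- b)) q"
      using q q2 by (intro V_minus B_sup B_minus a b) (auto simp: vl_inf_eq_neg_sup[of a b])
    also have "\<dots> = - max (V (- a) q) (V (- b) q)"
      using q q2 by (subst V_sup) (auto intro: B_minus a b)
    also have "\<dots> = min (V a q) (V b q)"
      using q q2 V_minus[OF a] V_minus[OF b] by simp
    finally show "V (inf a b) q = min (V a q) (V b q)" .
  qed auto
  then show "p \<in> D (inf a b) \<Longrightarrow> p \<in> D a \<Longrightarrow> p \<in> D b \<Longrightarrow> V (inf a b) p = min (V a p) (V b p)"
    by blast
qed

lemma mono: assumes "a \<in> B" "b \<in> B" "a \<le> b" "p \<in> D a" "p \<in> D b" shows "V a p \<le> V b p"
proof -
  have e: "sup a b = b" using assms(3) by (rule sup_absorb2)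
  have "V (sup a b) p = max (V a p) (V b p)" using assms by (intro V_sup) (simp_all add: e)
  then have "V b p = max (V a p) (V b p)" by (simp only: e)
  then show ?thesis by (metis max.cobounded1)
qed

lemma reflect:
  assumes a: "a \<in> B" and b: "b \<in> B"
    and le: "\<And>p. p \<in> D a \<Longrightarrow> p \<in> D b \<Longrightarrow> V a p \<le> V b p"
  shows "a \<le> b"
proof -
  let ?s = "sup a b"
  have s: "?s \<in> B" using B_sup a b by blast
  let ?U = "D ?s \<inter> D b"
  have U: "openin X ?U" using elem(1) s b by blast
  have "\<And>q. q \<in> ?U \<Longrightarrow> V ?s q = V b q"
  proof (rule ext[OF s U _ cont_on[OF b] elem(2)[OF a]])
    fix q assume "q \<in> ?U" "q \<in> D a"
    then show "V ?s q = V b q" using V_sup[OF a b, of q] le[of q] by simp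
  qed auto
  then have "S_eq (T ?s) (T b)" unfolding S_eq_def by blast
  then have "?s = b" using T_inj s b by blast
  then show ?thesis by (simp add: le_iff_sup)
qed

lemma approx:
  assumes h: "continuous_map X euclideanreal h" and e: "0 < \<epsilon>"
  obtains v h' where "v \<in> B" "continuous_map X euclideanreal h'"
    "\<And>p. p \<in> D v \<Longrightarrow> V v p = h' p" "\<And>p. p \<in> topspace X \<Longrightarrow> \<bar>h p - h' p\<bar> < \<epsilon>"
proof -
  obtain v h' where v: "v \<in> generated_ideal B u" "continuous_map X euclideanreal h'"
    "S_eq (T v) (topspace X, h')" "\<forall>p\<in>topspace X. \<bar>h p - h' p\<bar> < \<epsilon>"
    using dense h e unfolding sup_closure_is_C_def by meson
  have vB: "v \<in> B" using v(1) unfolding generated_ideal_def by blast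
  show ?thesis
  proof (rule that[OF vB v(2)])
    show "\<And>p. p \<in> D v \<Longrightarrow> V v p = h' p" using v(3) D_sub[OF vB] unfolding S_eq_def by auto
  qed (use v in auto)
qed

end

context band_rep begin

lemma open_gt_top: "continuous_map X euclideanreal f \<Longrightarrow> openin X {q\<in>topspace X. c < f q}"
  using open_less_const(2)[of X "topspace X" f c] by simp

lemma core:
  assumes zB: "z \<in> B" and z0: "0 \<le> z" and g: "S_elem X g"
    and gnn: "\<And>p. p \<in> fst g \<Longrightarrow> 0 \<le> snd g p"
    and gz: "S_le g (T z)"
  shows "\<exists>w\<in>B. 0 \<le> w \<and> w \<le> z \<and> S_eq (T w) g"
proof -
  obtain G gv where gdef: "g = (G, gv)" by (cases g)
  have G: "openin X G" "X closure_of G = topspace X" "continuous_map (subtopology X G) euclideanreal gv"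
    using g unfolding S_elem_def gdef by simp_all
  have gnn': "\<And>p. p \<in> G \<Longrightarrow> 0 \<le> gv p" using gnn unfolding gdef by simp
  have gz': "\<And>p. p \<in> G \<Longrightarrow> p \<in> D z \<Longrightarrow> gv p \<le> V z p" using gz unfolding S_le_def gdef by simp
  define W where "W = {v\<in>B. 0 \<le> v \<and> v \<le> z \<and> (\<forall>p. p \<in> D v \<longrightarrow> p \<in> G \<longrightarrow> V v p \<le> gv p)}"
  have W0: "0 \<in> W" unfolding W_def using B_zero z0 V_zero gnn' by simp
  have Wsub: "W \<subseteq> B" unfolding W_def by blast
  have "bdd_above W" unfolding W_def bdd_above_def by blast
  then obtain w where w: "is_sup W w"
    using complete W0 unfolding order_complete_def by blast
  have wB: "w \<in> B" using band Wsub w unfolding vl_band_def by blast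
  have vw: "\<And>v. v \<in> W \<Longrightarrow> v \<le> w" using w unfolding is_sup_def by blast
  have ub: "\<And>b. (\<And>v. v \<in> W \<Longrightarrow> v \<le> b) \<Longrightarrow> w \<le> b" using w unfolding is_sup_def by blast
  have w0: "0 \<le> w" using vw[OF W0] .
  have wz: "w \<le> z" by (rule ub) (simp add: W_def)
  have UwG: "openin X (D w \<inter> G)" using elem(1)[OF wB] G(1) by blast
  have cw: "continuous_map (subtopology X (D w \<inter> G)) euclideanreal (V w)"
    by (rule cont_on[OF wB]) blast
  have cg: "continuous_map (subtopology X (D w \<inter> G)) euclideanreal gv"
    by (rule continuous_map_from_subtopology_mono[OF G(3)]) blast
  have ge: "gv p \<le> V w p" if p: "p \<in> D w" "p \<in> G" for p
  proof (rule ccontr)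
    assume np: "\<not> gv p \<le> V w p"
    define t where "t = V w p"
    define k where "k = gv p"
    define m1 where "m1 = t + (k - t) / 3"
    define m2 where "m2 = t + 2 * (k - t) / 3"
    have m12: "m1 < m2" "t < m1" "m2 < k" using np unfolding m1_def m2_def t_def k_def by (auto simp: field_simps)
    define N where "N = {q \<in> D w \<inter> G. V w q < m1} \<inter> {q \<in> D w \<inter> G. m2 < gv q}"
    have N: "openin X N" unfolding N_def
      using open_less_const(1)[OF UwG cw] open_less_const(2)[OF UwG cg] by (rule openin_Int)
    have pN: "p \<in> N" unfolding N_def using p m12 unfolding t_def k_def by simp
    obtain \<phi> where \<phi>: "continuous_map X euclideanreal \<phi>" "\<phi> p = 1"
      "\<And>q. q \<in> topspace X \<Longrightarrow> 0 \<le> \<phi> q \<and> \<phi> q \<le> 1"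
      "\<And>q. q \<in> topspace X \<Longrightarrow> q \<notin> N \<Longrightarrow> \<phi> q = 0"
      using bump[OF cpt hd N pN] by blast
    define h where "h = (\<lambda>q. m2 * \<phi> q)"
    have hc: "continuous_map X euclideanreal h" unfolding h_def using \<phi>(1) by (rule continuous_map_real_mult_left)
    define \<epsilon> where "\<epsilon> = (m2 - m1) / 4"
    have \<epsilon>: "0 < \<epsilon>" unfolding \<epsilon>_def using m12 by simp
    obtain v h' where v: "v \<in> B" "continuous_map X euclideanreal h'"
      "\<And>p. p \<in> D v \<Longrightarrow> V v p = h' p" "\<And>p. p \<in> topspace X \<Longrightarrow> \<bar>h p - h' p\<bar> < \<epsilon>"
      using approx[OF hc \<epsilon>] by blast
    define a1 where "a1 = v + (-\<epsilon>) *\<^sub>R u"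
    define a2 where "a2 = sup a1 0"
    define v' where "v' = inf a2 z"
    have eu: "(-\<epsilon>) *\<^sub>R u \<in> B" by (rule B_scale[OF B_u])
    have a1B: "a1 \<in> B" unfolding a1_def using v(1) eu by (rule B_add)
    have a2B: "a2 \<in> B" unfolding a2_def using a1B B_zero by (rule B_sup)
    have v'B: "v' \<in> B" unfolding v'_def using a2B zB by (rule B_inf)
    let ?F = "{w, z, v, u, (-\<epsilon>) *\<^sub>R u, a1, 0, a2, v'}"
    have F: "finite ?F" "?F \<subseteq> B" using wB zB v(1) B_u eu a1B B_zero a2B v'B by auto
    have Vv': "V v' q = min (max (h' q - \<epsilon>) 0) (V z q)" if q: "q \<in> DD ?F" for q
    proof -
      have qs: "q \<in> D w" "q \<in> D z" "q \<in> D v" "q \<in> D u" "q \<in> D ((-\<epsilon>) *\<^sub>R u)" "q \<in> D a1"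
        "q \<in> D 0" "q \<in> D a2" "q \<in> D v'" using q unfolding DD_mem by simp_all
      have "V a1 q = V v q + V ((-\<epsilon>) *\<^sub>R u) q" unfolding a1_def
        using v(1) eu qs by (intro V_add) (simp_all add: a1_def)
      also have "\<dots> = h' q - \<epsilon>" using V_scale[OF B_u qs(5) qs(4)] V_u[OF qs(4)] v(3)[OF qs(3)] by simp
      finally have 1: "V a1 q = h' q - \<epsilon>" .
      have 2: "V a2 q = max (h' q - \<epsilon>) 0" unfolding a2_def
        using V_sup[OF a1B B_zero, of q] qs 1 V_zero[OF qs(7)] by (simp add: a2_def)
      show ?thesis unfolding v'_def using V_inf[OF a2B zB, of q] qs 2 by (simp add: v'_def)
    qed
    have hle: "max (h' q - \<epsilon>) 0 \<le> gv q" if q: "q \<in> topspace X" "q \<in> G" for q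
    proof -
      have "h q \<le> gv q"
      proof (cases "q \<in> N")
        case True
        then have gq: "m2 < gv q" unfolding N_def by simp
        have "m2 * \<phi> q \<le> max m2 0"
        proof (cases "0 \<le> m2")
          case True then show ?thesis using \<phi>(3)[OF q(1)] by (simp add: mult_left_le)
        next
          case False then show ?thesis using \<phi>(3)[OF q(1)] by (simp add: mult_nonpos_nonneg)
        qed
        then show ?thesis unfolding h_def using gq gnn'[OF q(2)] by simp
      next
        case False
        then show ?thesis unfolding h_def using \<phi>(4)[OF q(1)] gnn'[OF q(2)] by simp
      qed
      then show ?thesis using v(4)[OF q(1)] gnn'[OF q(2)] by simp
    qed
    have v'W: "v' \<in> W"
    proof -
      have "0 \<le> a2" unfolding a2_def by simp
      then have "0 \<le> v'" unfolding v'_def using z0 by simp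
      moreover have "v' \<le> z" unfolding v'_def by simp
      moreover have "\<forall>q. q \<in> D v' \<longrightarrow> q \<in> G \<longrightarrow> V v' q \<le> gv q"
      proof -
        have U: "openin X (D v' \<inter> G)" using elem(1)[OF v'B] G(1) by blast
        have c1: "continuous_map (subtopology X (D v' \<inter> G)) euclideanreal (V v')"
          by (rule cont_on[OF v'B]) blast
        have c2: "continuous_map (subtopology X (D v' \<inter> G)) euclideanreal gv"
          by (rule continuous_map_from_subtopology_mono[OF G(3)]) blast
        have "\<And>q. q \<in> D v' \<inter> G \<Longrightarrow> V v' q \<le> gv q"
        proof (rule le_extend[OF U c1 c2 DD_props[OF F, THEN conjunct2]])
          fix q assume q: "q \<in> D v' \<inter> G" "q \<in> DD ?F"
          have "q \<in> topspace X" using q(2) unfolding DD_mem by simp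
          then have "max (h' q - \<epsilon>) 0 \<le> gv q" using hle[of q] q(1) by blast
          then show "V v' q \<le> gv q" unfolding Vv'[OF q(2)] by (rule min.coboundedI1)
        qed
        then show ?thesis by blast
      qed
      ultimately show ?thesis unfolding W_def using v'B by blast
    qed
    have v'w: "v' \<le> w" by (rule vw[OF v'W])
    define N' where "N' = N \<inter> {q\<in>topspace X. m2 - 2 * \<epsilon> < h' q}"
    have N': "openin X N'" unfolding N'_def using N open_gt_top[OF v(2)] by (rule openin_Int)
    have "p \<in> topspace X" using pN N openin_subset by blast
    then have "m2 - 2 * \<epsilon> < h' p" using v(4)[of p] \<phi>(2) \<epsilon> unfolding h_def by simp
    then have "p \<in> N'" unfolding N'_def using pN \<open>p \<in> topspace X\<close> by simp
    then obtain q where q: "q \<in> N'" "q \<in> DD ?F"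
      using dense_meet[OF DD_props[OF F, THEN conjunct2] N'] by blast
    have qs: "q \<in> D w" "q \<in> D z" "q \<in> D v'" using q(2) unfolding DD_mem by simp_all
    have qN: "V w q < m1" "m2 < gv q" "q \<in> G" "m2 - 2 * \<epsilon> < h' q"
      using q(1) unfolding N'_def N_def by simp_all
    have "gv q \<le> V z q" using gz'[OF qN(3) qs(2)] .
    moreover have "m1 < h' q - \<epsilon>" using qN(4) m12 unfolding \<epsilon>_def by (simp add: field_simps)
    ultimately have "m1 < V v' q" using Vv'[OF q(2)] qN m12 by simp
    moreover have "V v' q \<le> V w q" using mono[OF v'B wB v'w qs(3) qs(1)] .
    ultimately show False using qN(1) by simp
  qed
  have le: "V w p \<le> gv p" if p: "p \<in> D w" "p \<in> G" for p
  proof (rule ccontr)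
    assume np: "\<not> V w p \<le> gv p"
    define t where "t = V w p"
    define k where "k = gv p"
    define m1 where "m1 = k + (t - k) / 3"
    define m2 where "m2 = k + 2 * (t - k) / 3"
    have m12: "m1 < m2" "k < m1" "m2 < t" using np unfolding m1_def m2_def t_def k_def by (auto simp: field_simps)
    define N where "N = {q \<in> D w \<inter> G. m2 < V w q} \<inter> {q \<in> D w \<inter> G. gv q < m1}"
    have N: "openin X N" unfolding N_def
      using open_less_const(2)[OF UwG cw] open_less_const(1)[OF UwG cg] by (rule openin_Int)
    have pN: "p \<in> N" unfolding N_def using p m12 unfolding t_def k_def by simp
    obtain \<phi> where \<phi>: "continuous_map X euclideanreal \<phi>" "\<phi> p = 1"
      "\<And>q. q \<in> topspace X \<Longrightarrow> 0 \<le> \<phi> q \<and> \<phi> q \<le> 1"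
      "\<And>q. q \<in> topspace X \<Longrightarrow> q \<notin> N \<Longrightarrow> \<phi> q = 0"
      using bump[OF cpt hd N pN] by blast
    define h where "h = (\<lambda>q. (m2 - m1) * \<phi> q)"
    have hc: "continuous_map X euclideanreal h" unfolding h_def using \<phi>(1) by (rule continuous_map_real_mult_left)
    define \<epsilon> where "\<epsilon> = (m2 - m1) / 4"
    have \<epsilon>: "0 < \<epsilon>" unfolding \<epsilon>_def using m12 by simp
    obtain v h' where v: "v \<in> B" "continuous_map X euclideanreal h'"
      "\<And>p. p \<in> D v \<Longrightarrow> V v p = h' p" "\<And>p. p \<in> topspace X \<Longrightarrow> \<bar>h p - h' p\<bar> < \<epsilon>"
      using approx[OF hc \<epsilon>] by blast
    define a1 where "a1 = v + (-\<epsilon>) *\<^sub>R u"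
    define e where "e = sup a1 0"
    define w' where "w' = w + (-1) *\<^sub>R e"
    have eu: "(-\<epsilon>) *\<^sub>R u \<in> B" by (rule B_scale[OF B_u])
    have a1B: "a1 \<in> B" unfolding a1_def using v(1) eu by (rule B_add)
    have eB: "e \<in> B" unfolding e_def using a1B B_zero by (rule B_sup)
    have meB: "(-1) *\<^sub>R e \<in> B" by (rule B_scale[OF eB])
    have w'B: "w' \<in> B" unfolding w'_def using wB meB by (rule B_add)
    let ?F = "{w, v, u, (-\<epsilon>) *\<^sub>R u, a1, 0, e, (-1) *\<^sub>R e, w'}"
    have F: "finite ?F" "?F \<subseteq> B" using wB v(1) B_u eu a1B B_zero eB meB w'B by auto
    have Ve: "V e q = max (h' q - \<epsilon>) 0" and Vw': "V w' q = V w q - max (h' q - \<epsilon>) 0"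
      if q: "q \<in> DD ?F" for q
    proof -
      have qs: "q \<in> D w" "q \<in> D v" "q \<in> D u" "q \<in> D ((-\<epsilon>) *\<^sub>R u)" "q \<in> D a1"
        "q \<in> D 0" "q \<in> D e" "q \<in> D ((-1) *\<^sub>R e)" "q \<in> D w'" using q unfolding DD_mem by simp_all
      have "V a1 q = V v q + V ((-\<epsilon>) *\<^sub>R u) q" unfolding a1_def
        using v(1) eu qs by (intro V_add) (simp_all add: a1_def)
      also have "\<dots> = h' q - \<epsilon>" using V_scale[OF B_u qs(4) qs(3)] V_u[OF qs(3)] v(3)[OF qs(2)] by simp
      finally have 1: "V a1 q = h' q - \<epsilon>" .
      show 2: "V e q = max (h' q - \<epsilon>) 0" unfolding e_def
        using V_sup[OF a1B B_zero, of q] qs 1 V_zero[OF qs(6)] by (simp add: e_def)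
      have "V w' q = V w q + V ((-1) *\<^sub>R e) q" unfolding w'_def
        using wB meB qs by (intro V_add) (simp_all add: w'_def)
      also have "\<dots> = V w q - V e q" using V_scale[OF eB qs(8) qs(7)] by simp
      finally show "V w' q = V w q - max (h' q - \<epsilon>) 0" using 2 by simp
    qed
    have upper: "v0 \<le> w'" if v0: "v0 \<in> W" for v0
    proof -
      have v0B: "v0 \<in> B" and v0g: "\<And>q. q \<in> D v0 \<Longrightarrow> q \<in> G \<Longrightarrow> V v0 q \<le> gv q"
        using v0 unfolding W_def by blast+
      have v0w: "v0 \<le> w" by (rule vw[OF v0])
      have U: "openin X (D v0 \<inter> D w')" using elem(1)[OF v0B] elem(1)[OF w'B] by blast
      have c1: "continuous_map (subtopology X (D v0 \<inter> D w')) euclideanreal (V v0)"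
        by (rule cont_on[OF v0B]) blast
      have c2: "continuous_map (subtopology X (D v0 \<inter> D w')) euclideanreal (V w')"
        by (rule cont_on[OF w'B]) blast
      have E: "X closure_of (DD ?F \<inter> G) = topspace X"
        using DD_props[OF F] G(2) dense_open_Int by blast
      have "\<And>q. q \<in> D v0 \<inter> D w' \<Longrightarrow> V v0 q \<le> V w' q"
      proof (rule le_extend[OF U c1 c2 E])
        fix q assume q: "q \<in> D v0 \<inter> D w'" "q \<in> DD ?F \<inter> G"
        have qt: "q \<in> topspace X" and qw: "q \<in> D w" and qG: "q \<in> G"
          using q(2) unfolding Int_iff DD_mem by simp_all
        have a: "V v0 q \<le> gv q" using v0g q qG by blast
        have b: "V v0 q \<le> V w q" using mono[OF v0B wB v0w _ qw] q(1) by blast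
        have eq: "V w' q = V w q - max (h' q - \<epsilon>) 0" using Vw' q(2) by blast
        show "V v0 q \<le> V w' q"
        proof (cases "q \<in> N")
          case True
          then have n: "m2 < V w q" "gv q < m1" unfolding N_def by simp_all
          have "h q \<le> m2 - m1" unfolding h_def using \<phi>(3)[OF qt] m12 by (simp add: mult_left_le)
          moreover have "0 \<le> h q" unfolding h_def using \<phi>(3)[OF qt] m12 by simp
          ultimately have "max (h' q - \<epsilon>) 0 \<le> m2 - m1" using v(4)[OF qt] by simp
          then show ?thesis unfolding eq using n a by linarith
        next
          case False
          then have "h q = 0" unfolding h_def using \<phi>(4)[OF qt] by simp
          then have "max (h' q - \<epsilon>) 0 = 0" using v(4)[OF qt] by simp
          then show ?thesis using eq b by simp
        qed
      qed
      then show ?thesis using reflect[OF v0B w'B] by blast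
    qed
    have "w \<le> w'" using ub upper by blast
    then have "e \<le> 0" unfolding w'_def by simp
    moreover have "0 \<le> e" unfolding e_def by simp
    ultimately have e0: "e = 0" by simp
    define N' where "N' = {q\<in>topspace X. 2 * \<epsilon> < h' q}"
    have N': "openin X N'" unfolding N'_def using open_gt_top[OF v(2)] .
    have "p \<in> topspace X" using pN N openin_subset by blast
    then have "\<bar>h p - h' p\<bar> < \<epsilon>" using v(4) by blast
    moreover have "h p = 4 * \<epsilon>" unfolding h_def \<epsilon>_def using \<phi>(2) by simp
    ultimately have "2 * \<epsilon> < h' p" using \<epsilon> unfolding abs_less_iff by linarith
    then have "p \<in> N'" unfolding N'_def using \<open>p \<in> topspace X\<close> by simp
    then obtain q where q: "q \<in> N'" "q \<in> DD ?F"
      using dense_meet[OF DD_props[OF F, THEN conjunct2] N'] by blast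
    have "V e q = max (h' q - \<epsilon>) 0" by (rule Ve[OF q(2)])
    moreover have "q \<in> D 0" using q(2) unfolding DD_mem by simp
    ultimately have "max (h' q - \<epsilon>) 0 = 0" using V_zero e0 by simp
    moreover have "2 * \<epsilon> < h' q" using q(1) unfolding N'_def by simp
    ultimately show False using \<epsilon> by simp
  qed
  have "S_eq (T w) g" unfolding S_eq_def gdef using ge le by (simp add: antisym)
  then show ?thesis using wB w0 wz by blast
qed

end

context band_rep begin

lemma signed:
  assumes aB: "a \<in> B" and G: "S_elem X g" and le: "S_le (S_abs g) (S_abs (T a))"
  shows "\<exists>w1\<in>B. \<exists>w2\<in>B. 0 \<le> w1 \<and> w1 \<le> vl_abs a \<and> 0 \<le> w2 \<and> w2 \<le> vl_abs a
           \<and> S_eq (T (w1 - w2)) g"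
proof -
  obtain GU gv where gdef: "g = (GU, gv)" by (cases g)
  have GU: "openin X GU" "X closure_of GU = topspace X" "continuous_map (subtopology X GU) euclideanreal gv"
    using G unfolding S_elem_def gdef by simp_all
  have le': "\<And>p. p \<in> GU \<Longrightarrow> p \<in> D a \<Longrightarrow> \<bar>gv p\<bar> \<le> \<bar>V a p\<bar>"
    using le unfolding S_le_def S_abs_def gdef by simp
  define z where "z = vl_abs a"
  have zB: "z \<in> B" unfolding z_def using aB by (rule B_abs)
  have z0: "0 \<le> z" unfolding z_def by (rule vl_abs_nonneg)
  have maB: "- a \<in> B" using aB by (rule B_minus)
  have Vz: "V z q = \<bar>V a q\<bar>" if q: "q \<in> D z" "q \<in> D a" "q \<in> D (- a)" for q
  proof -
    have "V z q = max (V a q) (V (- a) q)" unfolding z_def vl_abs_def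
      using q by (intro V_sup aB maB) (simp_all add: z_def vl_abs_def)
    then show ?thesis using V_minus[OF aB q(3) q(2)] by simp
  qed
  have bound: "max (s * gv q) 0 \<le> V z q" if q: "q \<in> GU \<inter> D z" and s: "s = 1 \<or> s = -1" for q s
  proof -
    have U: "openin X (GU \<inter> D z)" using GU(1) elem(1)[OF zB] by blast
    have c1: "continuous_map (subtopology X (GU \<inter> D z)) euclideanreal (\<lambda>q. max (s * gv q) 0)"
      by (intro continuous_map_real_max continuous_map_real_mult_left
          continuous_map_from_subtopology_mono[OF GU(3)]) auto
    have c2: "continuous_map (subtopology X (GU \<inter> D z)) euclideanreal (V z)"
      by (rule cont_on[OF zB]) blast
    have F: "finite {a, - a}" "{a, - a} \<subseteq> B" using aB maB by auto
    have "\<And>q. q \<in> GU \<inter> D z \<Longrightarrow> max (s * gv q) 0 \<le> V z q"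
    proof (rule le_extend[OF U c1 c2 DD_props[OF F, THEN conjunct2]])
      fix q assume q: "q \<in> GU \<inter> D z" "q \<in> DD {a, - a}"
      have qs: "q \<in> D a" "q \<in> D (- a)" using q(2) unfolding DD_mem by simp_all
      have "max (s * gv q) 0 \<le> \<bar>gv q\<bar>" using s by auto
      also have "\<dots> \<le> \<bar>V a q\<bar>" using le' q(1) qs by blast
      also have "\<dots> = V z q" using Vz[of q] q(1) qs by simp
      finally show "max (s * gv q) 0 \<le> V z q" .
    qed
    then show ?thesis using q by blast
  qed
  define g1 where "g1 = (GU, \<lambda>p. max (1 * gv p) 0)"
  define g2 where "g2 = (GU, \<lambda>p. max ((-1) * gv p) 0)"
  have g1: "S_elem X g1" unfolding g1_def S_elem_def using GU
    by (simp add: continuous_map_real_max)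
  have g2: "S_elem X g2" unfolding g2_def S_elem_def using GU
    by (simp add: continuous_map_real_max)
  have g1z: "S_le g1 (T z)" unfolding S_le_def g1_def using bound[of _ 1] by simp
  have g2z: "S_le g2 (T z)" unfolding S_le_def g2_def using bound[of _ "-1"] by simp
  obtain w1 where w1: "w1 \<in> B" "0 \<le> w1" "w1 \<le> z" "S_eq (T w1) g1"
    using core[OF zB z0 g1 _ g1z] unfolding g1_def by auto
  obtain w2 where w2: "w2 \<in> B" "0 \<le> w2" "w2 \<le> z" "S_eq (T w2) g2"
    using core[OF zB z0 g2 _ g2z] unfolding g2_def by auto
  have mw2: "- w2 \<in> B" using w2(1) by (rule B_minus)
  have dB: "w1 - w2 \<in> B" using w1(1) w2(1) by (rule B_diff)
  have "S_eq (T (w1 - w2)) g"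
  proof -
    have U: "openin X (D (w1 - w2) \<inter> GU)" using GU(1) elem(1)[OF dB] by blast
    have c: "continuous_map (subtopology X (D (w1 - w2) \<inter> GU)) euclideanreal gv"
      by (rule continuous_map_from_subtopology_mono[OF GU(3)]) blast
    have F: "finite {w1, w2, - w2}" "{w1, w2, - w2} \<subseteq> B" using w1(1) w2(1) mw2 by auto
    have "\<And>q. q \<in> D (w1 - w2) \<inter> GU \<Longrightarrow> V (w1 - w2) q = gv q"
    proof (rule ext[OF dB U _ c DD_props[OF F, THEN conjunct2]])
      fix q assume q: "q \<in> D (w1 - w2) \<inter> GU" "q \<in> DD {w1, w2, - w2}"
      have qs: "q \<in> D w1" "q \<in> D w2" "q \<in> D (- w2)" using q(2) unfolding DD_mem by simp_all
      have "V (w1 + - w2) q = V w1 q + V (- w2) q"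
        using q(1) qs by (intro V_add w1(1) mw2) simp_all
      also have "\<dots> = V w1 q - V w2 q" using V_minus[OF w2(1) qs(3) qs(2)] by simp
      also have "V w1 q = max (gv q) 0" using w1(4) q(1) qs unfolding S_eq_def g1_def by simp
      also have "V w2 q = max (- gv q) 0" using w2(4) q(1) qs unfolding S_eq_def g2_def by simp
      finally show "V (w1 - w2) q = gv q" by simp
    qed blast
    then show ?thesis unfolding S_eq_def gdef by simp
  qed
  then show ?thesis using w1 w2 unfolding z_def by blast
qed

end

locale wick =
  fixes I :: "'i set"
    and B :: "'i \<Rightarrow> 'e::{ordered_real_vector,lattice} set"
    and u :: "'i \<Rightarrow> 'e"
    and y :: "'e \<Rightarrow> 'i \<Rightarrow> 'e"
    and X :: "'i \<Rightarrow> 'x topology"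
    and Ta :: "'i \<Rightarrow> 'e \<Rightarrow> 'x sfun"
  assumes complete: "order_complete TYPE('e)"
    and bands: "\<And>\<alpha>. \<alpha> \<in> I \<Longrightarrow> vl_band (B \<alpha>)"
    and disj: "\<And>\<alpha> \<beta> a b. \<alpha> \<in> I \<Longrightarrow> \<beta> \<in> I \<Longrightarrow> \<alpha> \<noteq> \<beta> \<Longrightarrow> a \<in> B \<alpha> \<Longrightarrow> b \<in> B \<beta> \<Longrightarrow> vl_disjoint a b"
    and units: "\<And>\<alpha>. \<alpha> \<in> I \<Longrightarrow> weak_unit (B \<alpha>) (u \<alpha>)"
    and comp_in: "\<And>x \<alpha>. \<alpha> \<in> I \<Longrightarrow> y x \<alpha> \<in> B \<alpha>"
    and comp_rest: "\<And>x \<alpha> b. \<alpha> \<in> I \<Longrightarrow> b \<in> B \<alpha> \<Longrightarrow> vl_disjoint (x - y x \<alpha>) b"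
    and decomp: "\<And>x. 0 \<le> x \<Longrightarrow> is_sup (y x ` I) x"
    and cpt: "\<And>\<alpha>. \<alpha> \<in> I \<Longrightarrow> compact_space (X \<alpha>)"
    and hd: "\<And>\<alpha>. \<alpha> \<in> I \<Longrightarrow> Hausdorff_space (X \<alpha>)"
    and hom: "\<And>\<alpha>. \<alpha> \<in> I \<Longrightarrow> S_inj_lattice_hom (X \<alpha>) (B \<alpha>) (Ta \<alpha>)"
    and one: "\<And>\<alpha>. \<alpha> \<in> I \<Longrightarrow> S_eq (Ta \<alpha> (u \<alpha>)) (S_one (X \<alpha>))"
    and dense: "\<And>\<alpha>. \<alpha> \<in> I \<Longrightarrow> sup_closure_is_C (X \<alpha>) (Ta \<alpha>) (generated_ideal (B \<alpha>) (u \<alpha>))"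
begin

lemma br: "\<alpha> \<in> I \<Longrightarrow> band_rep (X \<alpha>) (B \<alpha>) (u \<alpha>) (Ta \<alpha>)"
  unfolding band_rep_def using complete bands units cpt hd hom one dense by blast

lemma uniq:
  assumes a: "\<alpha> \<in> I" and q: "q \<in> B \<alpha>" and dq: "\<And>b. b \<in> B \<alpha> \<Longrightarrow> vl_disjoint (x - q) b"
  shows "y x \<alpha> = q"
proof -
  interpret band_rep "X \<alpha>" "B \<alpha>" "u \<alpha>" "Ta \<alpha>" by (rule br[OF a])
  define d where "d = y x \<alpha> - q"
  have dB: "d \<in> B \<alpha>" unfolding d_def using comp_in[OF a] q by (rule B_diff)
  have "vl_disjoint ((x - q) - (x - y x \<alpha>)) (u \<alpha>)"
    using dq[OF B_u] comp_rest[OF a B_u] by (rule vl_disjoint_diff)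
  moreover have "(x - q) - (x - y x \<alpha>) = d" unfolding d_def by simp
  ultimately have "inf (vl_abs d) (u \<alpha>) = 0"
    unfolding vl_disjoint_def using vl_abs_of_nonneg[OF u_nonneg] by simp
  then have "d = 0" using unit dB unfolding weak_unit_def by blast
  then show ?thesis unfolding d_def by simp
qed

lemma y_add: assumes a: "\<alpha> \<in> I" shows "y (x1 + x2) \<alpha> = y x1 \<alpha> + y x2 \<alpha>"
proof (rule uniq[OF a])
  interpret band_rep "X \<alpha>" "B \<alpha>" "u \<alpha>" "Ta \<alpha>" by (rule br[OF a])
  show "y x1 \<alpha> + y x2 \<alpha> \<in> B \<alpha>" using comp_in[OF a] by (intro B_add)
  fix b assume b: "b \<in> B \<alpha>"
  have "vl_disjoint ((x1 - y x1 \<alpha>) + (x2 - y x2 \<alpha>)) b"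
    using comp_rest[OF a b] by (intro vl_disjoint_add)
  then show "vl_disjoint (x1 + x2 - (y x1 \<alpha> + y x2 \<alpha>)) b" by (simp add: algebra_simps)
qed

lemma y_scale: assumes a: "\<alpha> \<in> I" shows "y (c *\<^sub>R x) \<alpha> = c *\<^sub>R y x \<alpha>"
proof (rule uniq[OF a])
  interpret band_rep "X \<alpha>" "B \<alpha>" "u \<alpha>" "Ta \<alpha>" by (rule br[OF a])
  show "c *\<^sub>R y x \<alpha> \<in> B \<alpha>" using comp_in[OF a] by (intro B_scale)
  fix b assume b: "b \<in> B \<alpha>"
  have "vl_disjoint (c *\<^sub>R (x - y x \<alpha>)) b"
    using comp_rest[OF a b] by (intro vl_disjoint_scale)
  then show "vl_disjoint (c *\<^sub>R x - c *\<^sub>R y x \<alpha>) b" by (simp add: scaleR_diff_right)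
qed

lemma y_diff: assumes a: "\<alpha> \<in> I" shows "y (x1 - x2) \<alpha> = y x1 \<alpha> - y x2 \<alpha>"
  using y_add[OF a, of x1 "(-1) *\<^sub>R x2"] y_scale[OF a, of "-1" x2] by simp

lemma y_pos: assumes a: "\<alpha> \<in> I" and x: "0 \<le> x"
  shows "0 \<le> y x \<alpha>" "y x \<alpha> \<le> x"
proof -
  interpret band_rep "X \<alpha>" "B \<alpha>" "u \<alpha>" "Ta \<alpha>" by (rule br[OF a])
  show qx: "y x \<alpha> \<le> x" using decomp[OF x] a unfolding is_sup_def by blast
  define q where "q = y x \<alpha>"
  define r where "r = x - q"
  have r0: "0 \<le> r" unfolding r_def q_def using qx by simp
  define n where "n = sup (- q) 0"
  have nB: "n \<in> B \<alpha>" unfolding n_def q_def using comp_in[OF a] by (intro B_sup B_minus B_zero)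
  have n0: "0 \<le> n" unfolding n_def by simp
  have "- q \<le> r" unfolding r_def using x by simp
  then have nr: "n \<le> r" unfolding n_def using r0 by simp
  have "vl_disjoint r n" unfolding r_def q_def by (rule comp_rest[OF a nB])
  then have "inf r n = 0" using vl_disjoint_nonneg[OF r0 n0] by simp
  moreover have "inf r n = n" using nr by (simp add: inf_absorb2)
  ultimately have "n = 0" by simp
  then have "- q \<le> 0" unfolding n_def by (simp add: le_iff_sup)
  then show "0 \<le> y x \<alpha>" unfolding q_def by simp
qed

lemma y_bd_pos: assumes a: "\<alpha> \<in> I" shows "sup (y x \<alpha>) 0 \<le> sup x 0"
proof -
  interpret band_rep "X \<alpha>" "B \<alpha>" "u \<alpha>" "Ta \<alpha>" by (rule br[OF a])
  define q where "q = y x \<alpha>"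
  define r where "r = x - q"
  define P where "P = sup x 0"
  define qp where "qp = sup q 0"
  have qpB: "qp \<in> B \<alpha>" unfolding qp_def q_def using comp_in[OF a] by (intro B_sup B_zero)
  have qp0: "0 \<le> qp" and P0: "0 \<le> P" unfolding qp_def P_def by simp_all
  have "q \<le> P + vl_abs r"
  proof -
    have "q = x + - r" unfolding r_def by simp
    also have "\<dots> \<le> P + vl_abs r" unfolding P_def by (intro add_mono vl_abs_ge) simp
    finally show ?thesis .
  qed
  moreover have "0 \<le> P + vl_abs r" using P0 vl_abs_nonneg[of r] by simp
  ultimately have "qp \<le> P + vl_abs r" unfolding qp_def by simp
  then have "qp = inf (P + vl_abs r) qp" by (simp add: inf_absorb2)
  also have "\<dots> \<le> inf P qp + inf (vl_abs r) qp"
    by (rule vl_inf_add_le[OF P0 vl_abs_nonneg qp0])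
  also have "inf (vl_abs r) qp = 0"
    using comp_rest[OF a qpB, of x] vl_abs_of_nonneg[OF qp0] unfolding vl_disjoint_def r_def q_def by simp
  finally have "qp \<le> inf P qp" by simp
  then have "qp \<le> P" using le_infE by blast
  then show ?thesis unfolding qp_def P_def q_def .
qed

lemma y_bd: assumes a: "\<alpha> \<in> I" shows "vl_abs (y x \<alpha>) \<le> sup x 0 + sup (- x) 0"
proof -
  have 1: "sup (y x \<alpha>) 0 \<le> sup x 0" by (rule y_bd_pos[OF a])
  have "sup (y (- x) \<alpha>) 0 \<le> sup (- x) 0" by (rule y_bd_pos[OF a])
  moreover have "y (- x) \<alpha> = - y x \<alpha>" using y_scale[OF a, of "-1" x] by simp
  ultimately have 2: "sup (- y x \<alpha>) 0 \<le> sup (- x) 0" by simp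
  have "y x \<alpha> \<le> sup (y x \<alpha>) 0 + sup (- y x \<alpha>) 0"
    by (intro add_increasing2) simp_all
  moreover have "- y x \<alpha> \<le> sup (y x \<alpha>) 0 + sup (- y x \<alpha>) 0"
    by (intro add_increasing) simp_all
  ultimately have "vl_abs (y x \<alpha>) \<le> sup (y x \<alpha>) 0 + sup (- y x \<alpha>) 0" unfolding vl_abs_def by simp
  also have "\<dots> \<le> sup x 0 + sup (- x) 0" using 1 2 by (rule add_mono)
  finally show ?thesis .
qed

lemma glue:
  assumes w: "\<And>\<beta>. \<beta> \<in> I \<Longrightarrow> w \<beta> \<in> B \<beta> \<and> 0 \<le> w \<beta> \<and> w \<beta> \<le> b"
  shows "\<exists>s. \<forall>\<alpha>\<in>I. y s \<alpha> = w \<alpha>"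
proof (cases "I = {}")
  case True then show ?thesis by simp
next
  case False
  have "w ` I \<noteq> {}" using False by simp
  moreover have "bdd_above (w ` I)" unfolding bdd_above_def using w by blast
  moreover have "\<forall>A::'e set. A \<noteq> {} \<longrightarrow> bdd_above A \<longrightarrow> (\<exists>s. is_sup A s)"
    using complete unfolding order_complete_def .
  ultimately have "\<exists>s. is_sup (w ` I) s" by (rule_tac mp[OF mp[OF spec[of _ "w ` I"]]])
  then obtain s where s: "is_sup (w ` I) s" by blast
  have ws: "\<And>\<beta>. \<beta> \<in> I \<Longrightarrow> w \<beta> \<le> s" using s unfolding is_sup_def by blast
  obtain \<beta>0 where "\<beta>0 \<in> I" using False by blast
  then have s0: "0 \<le> s" using ws[of \<beta>0] w[of \<beta>0] by (blast intro: order_trans)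
  have "y s \<alpha> = w \<alpha>" if a: "\<alpha> \<in> I" for \<alpha>
  proof -
    interpret band_rep "X \<alpha>" "B \<alpha>" "u \<alpha>" "Ta \<alpha>" by (rule br[OF a])
    define q where "q = y s \<alpha>"
    define r where "r = s - q"
    have q0: "0 \<le> q" and qs: "q \<le> s" unfolding q_def using y_pos[OF a s0] by simp_all
    have r0: "0 \<le> r" unfolding r_def using qs by simp
    have qB: "q \<in> B \<alpha>" unfolding q_def by (rule comp_in[OF a])
    have wa: "w \<alpha> \<in> B \<alpha>" "0 \<le> w \<alpha>" using w[OF a] by simp_all
    have key: "inf q c = inf (w \<alpha>) c" if c: "c \<in> B \<alpha>" "0 \<le> c" for c
    proof -
      have "inf r c = 0"
        using comp_rest[OF a c(1), of s] vl_disjoint_nonneg[OF r0 c(2)] unfolding r_def q_def by simp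
      have "inf s c = inf (r + q) c" unfolding r_def by simp
      also have "\<dots> \<le> inf r c + inf q c" by (rule vl_inf_add_le[OF r0 q0 c(2)])
      finally have 1: "inf s c \<le> inf q c" using \<open>inf r c = 0\<close> by simp
      have 2: "inf q c \<le> inf s c" using qs by (simp add: le_infI1)
      have 3: "inf s c \<le> inf (w \<alpha>) c"
      proof (rule vl_sup_inf_bound[OF s])
        fix p assume "p \<in> w ` I"
        then obtain \<beta> where b: "\<beta> \<in> I" "p = w \<beta>" by blast
        show "inf p c \<le> inf (w \<alpha>) c"
        proof (cases "\<beta> = \<alpha>")
          case True then show ?thesis using b by simp
        next
          case False
          have "vl_disjoint (w \<beta>) c" using disj[OF b(1) a False] w[OF b(1)] c(1) by blast
          then have "inf (w \<beta>) c = 0" using vl_disjoint_nonneg[of "w \<beta>" c] w[OF b(1)] c(2) by simp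
          then show ?thesis using b wa(2) c(2) by simp
        qed
      qed
      have 4: "inf (w \<alpha>) c \<le> inf s c" using ws[OF a] by (simp add: le_infI1)
      show ?thesis using 1 2 3 4 by (rule_tac antisym) (blast intro: order_trans)+
    qed
    define c where "c = sup q (w \<alpha>)"
    have "c \<in> B \<alpha>" unfolding c_def using qB wa(1) by (rule B_sup)
    moreover have "0 \<le> c" unfolding c_def using q0 by (simp add: le_supI1)
    ultimately have "inf q c = inf (w \<alpha>) c" by (rule key)
    then show ?thesis unfolding c_def q_def by (simp add: inf_absorb1)
  qed
  then show ?thesis by blast
qed

end

theorem corollary3p5:
  fixes I :: "'i set"
    and B :: "'i \<Rightarrow> 'e::{ordered_real_vector,lattice} set"
    and u :: "'i \<Rightarrow> 'e"
    and y :: "'e \<Rightarrow> 'i \<Rightarrow> 'e"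
    and X :: "'i \<Rightarrow> 'x topology"
    and T\<^sub>\<alpha> :: "'i \<Rightarrow> 'e \<Rightarrow> 'x sfun"
  assumes complete: "order_complete TYPE('e)"
    and bands: "\<And>\<alpha>. \<alpha> \<in> I \<Longrightarrow> vl_band (B \<alpha>)"
    and disj: "\<And>\<alpha> \<beta> a b. \<alpha> \<in> I \<Longrightarrow> \<beta> \<in> I \<Longrightarrow> \<alpha> \<noteq> \<beta> \<Longrightarrow> a \<in> B \<alpha> \<Longrightarrow> b \<in> B \<beta> \<Longrightarrow> vl_disjoint a b"
    and units: "\<And>\<alpha>. \<alpha> \<in> I \<Longrightarrow> weak_unit (B \<alpha>) (u \<alpha>)"
    and comp_in: "\<And>x \<alpha>. \<alpha> \<in> I \<Longrightarrow> y x \<alpha> \<in> B \<alpha>"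
    and comp_rest: "\<And>x \<alpha> b. \<alpha> \<in> I \<Longrightarrow> b \<in> B \<alpha> \<Longrightarrow> vl_disjoint (x - y x \<alpha>) b"
    and decomp: "\<And>x. 0 \<le> x \<Longrightarrow> is_sup (y x ` I) x"
    and cpt: "\<And>\<alpha>. \<alpha> \<in> I \<Longrightarrow> compact_space (X \<alpha>)"
    and hd: "\<And>\<alpha>. \<alpha> \<in> I \<Longrightarrow> Hausdorff_space (X \<alpha>)"
    and hom: "\<And>\<alpha>. \<alpha> \<in> I \<Longrightarrow> S_inj_lattice_hom (X \<alpha>) (B \<alpha>) (T\<^sub>\<alpha> \<alpha>)"
    and one: "\<And>\<alpha>. \<alpha> \<in> I \<Longrightarrow> S_eq (T\<^sub>\<alpha> \<alpha> (u \<alpha>)) (S_one (X \<alpha>))"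
    and dense: "\<And>\<alpha>. \<alpha> \<in> I \<Longrightarrow> sup_closure_is_C (X \<alpha>) (T\<^sub>\<alpha> \<alpha>) (generated_ideal (B \<alpha>) (u \<alpha>))"
  shows "Sp_ideal X I (range (\<lambda>x. \<lambda>\<alpha>. T\<^sub>\<alpha> \<alpha> (y x \<alpha>)))"
proof -
  interpret W: wick I B u y X "T\<^sub>\<alpha>"
    by (rule wick.intro) (fact assms)+
  let ?J = "range (\<lambda>x. \<lambda>\<alpha>. T\<^sub>\<alpha> \<alpha> (y x \<alpha>))"
  have elemJ: "Sp_elem X I (\<lambda>\<alpha>. T\<^sub>\<alpha> \<alpha> (y x \<alpha>))" for x
    unfolding Sp_elem_def
  proof
    fix \<alpha> assume a: "\<alpha> \<in> I"
    have "\<forall>x\<in>B \<alpha>. S_elem (X \<alpha>) (T\<^sub>\<alpha> \<alpha> x)" using hom[OF a] unfolding S_inj_lattice_hom_def by (rule conjunct1)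
    then show "S_elem (X \<alpha>) (T\<^sub>\<alpha> \<alpha> (y x \<alpha>))" using comp_in[OF a] by blast
  qed
  have P1: "\<forall>F\<in>?J. Sp_elem X I F" using elemJ by blast
  have P2: "?J \<noteq> {}" by simp
  have P3: "\<forall>F\<in>?J. \<forall>G\<in>?J. \<exists>H\<in>?J. Sp_eq I H (Sp_add F G)"
  proof (intro ballI)
    fix F G assume "F \<in> ?J" "G \<in> ?J"
    then obtain x1 x2 where F: "F = (\<lambda>\<alpha>. T\<^sub>\<alpha> \<alpha> (y x1 \<alpha>))" and G: "G = (\<lambda>\<alpha>. T\<^sub>\<alpha> \<alpha> (y x2 \<alpha>))" by blast
    have "Sp_eq I (\<lambda>\<alpha>. T\<^sub>\<alpha> \<alpha> (y (x1 + x2) \<alpha>)) (Sp_add F G)"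
      unfolding Sp_eq_def Sp_add_def F G
    proof
      fix \<alpha> assume a: "\<alpha> \<in> I"
      show "S_eq (T\<^sub>\<alpha> \<alpha> (y (x1 + x2) \<alpha>)) (S_add (T\<^sub>\<alpha> \<alpha> (y x1 \<alpha>)) (T\<^sub>\<alpha> \<alpha> (y x2 \<alpha>)))"
        unfolding W.y_add[OF a] using band_rep.hom_parts(1)[OF W.br[OF a]] comp_in[OF a] by blast
    qed
    then show "\<exists>H\<in>?J. Sp_eq I H (Sp_add F G)" by blast
  qed
  have P4: "\<forall>c. \<forall>F\<in>?J. \<exists>H\<in>?J. Sp_eq I H (Sp_scale c F)"
  proof (intro allI ballI)
    fix c F assume "F \<in> ?J"
    then obtain x1 where F: "F = (\<lambda>\<alpha>. T\<^sub>\<alpha> \<alpha> (y x1 \<alpha>))" by blast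
    have "Sp_eq I (\<lambda>\<alpha>. T\<^sub>\<alpha> \<alpha> (y (c *\<^sub>R x1) \<alpha>)) (Sp_scale c F)"
      unfolding Sp_eq_def Sp_scale_def F
    proof
      fix \<alpha> assume a: "\<alpha> \<in> I"
      show "S_eq (T\<^sub>\<alpha> \<alpha> (y (c *\<^sub>R x1) \<alpha>)) (S_scale c (T\<^sub>\<alpha> \<alpha> (y x1 \<alpha>)))"
        unfolding W.y_scale[OF a] using band_rep.hom_parts(2)[OF W.br[OF a]] comp_in[OF a] by blast
    qed
    then show "\<exists>H\<in>?J. Sp_eq I H (Sp_scale c F)" by blast
  qed
  have P5: "\<forall>F\<in>?J. \<forall>G. Sp_elem X I G \<longrightarrow> Sp_le I (Sp_abs G) (Sp_abs F) \<longrightarrow> (\<exists>H\<in>?J. Sp_eq I H G)"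
  proof (intro ballI allI impI)
    fix F G assume "F \<in> ?J" and Ge: "Sp_elem X I G" and Gle: "Sp_le I (Sp_abs G) (Sp_abs F)"
    then obtain x0 where F: "F = (\<lambda>\<alpha>. T\<^sub>\<alpha> \<alpha> (y x0 \<alpha>))" by blast
    define b where "b = sup x0 0 + sup (- x0) 0"
    have "\<forall>\<alpha>\<in>I. \<exists>w1. \<exists>w2. w1 \<in> B \<alpha> \<and> w2 \<in> B \<alpha> \<and> 0 \<le> w1 \<and> w1 \<le> b \<and> 0 \<le> w2 \<and> w2 \<le> b
        \<and> S_eq (T\<^sub>\<alpha> \<alpha> (w1 - w2)) (G \<alpha>)"
    proof
      fix \<alpha> assume a: "\<alpha> \<in> I"
      have g: "S_elem (X \<alpha>) (G \<alpha>)" using Ge a unfolding Sp_elem_def by blast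
      have l: "S_le (S_abs (G \<alpha>)) (S_abs (T\<^sub>\<alpha> \<alpha> (y x0 \<alpha>)))"
        using Gle a unfolding Sp_le_def Sp_abs_def F by blast
      obtain w1 w2 where w: "w1 \<in> B \<alpha>" "w2 \<in> B \<alpha>" "0 \<le> w1" "w1 \<le> vl_abs (y x0 \<alpha>)"
        "0 \<le> w2" "w2 \<le> vl_abs (y x0 \<alpha>)" "S_eq (T\<^sub>\<alpha> \<alpha> (w1 - w2)) (G \<alpha>)"
        using band_rep.signed[OF W.br[OF a] comp_in[OF a] g l] by blast
      have "vl_abs (y x0 \<alpha>) \<le> b" unfolding b_def by (rule W.y_bd[OF a])
      then show "\<exists>w1. \<exists>w2. w1 \<in> B \<alpha> \<and> w2 \<in> B \<alpha> \<and> 0 \<le> w1 \<and> w1 \<le> b \<and> 0 \<le> w2 \<and> w2 \<le> b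
        \<and> S_eq (T\<^sub>\<alpha> \<alpha> (w1 - w2)) (G \<alpha>)"
        using w by (blast intro: order_trans)
    qed
    then obtain w1 where "\<forall>\<alpha>\<in>I. \<exists>w2. w1 \<alpha> \<in> B \<alpha> \<and> w2 \<in> B \<alpha> \<and> 0 \<le> w1 \<alpha> \<and> w1 \<alpha> \<le> b \<and> 0 \<le> w2 \<and> w2 \<le> b
        \<and> S_eq (T\<^sub>\<alpha> \<alpha> (w1 \<alpha> - w2)) (G \<alpha>)" by (rule bchoice[elim_format]) blast
    then obtain w2 where w: "\<forall>\<alpha>\<in>I. w1 \<alpha> \<in> B \<alpha> \<and> w2 \<alpha> \<in> B \<alpha> \<and> 0 \<le> w1 \<alpha> \<and> w1 \<alpha> \<le> b \<and> 0 \<le> w2 \<alpha> \<and> w2 \<alpha> \<le> b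
        \<and> S_eq (T\<^sub>\<alpha> \<alpha> (w1 \<alpha> - w2 \<alpha>)) (G \<alpha>)" by (rule bchoice[elim_format]) blast
    obtain s1 where s1: "\<forall>\<alpha>\<in>I. y s1 \<alpha> = w1 \<alpha>" using W.glue[of w1 b] w by blast
    obtain s2 where s2: "\<forall>\<alpha>\<in>I. y s2 \<alpha> = w2 \<alpha>" using W.glue[of w2 b] w by blast
    have "Sp_eq I (\<lambda>\<alpha>. T\<^sub>\<alpha> \<alpha> (y (s1 - s2) \<alpha>)) G"
      unfolding Sp_eq_def
    proof
      fix \<alpha> assume a: "\<alpha> \<in> I"
      have "y (s1 - s2) \<alpha> = w1 \<alpha> - w2 \<alpha>" using W.y_diff[OF a] s1 s2 a by simp
      then show "S_eq (T\<^sub>\<alpha> \<alpha> (y (s1 - s2) \<alpha>)) (G \<alpha>)" using w a by simp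
    qed
    then show "\<exists>H\<in>?J. Sp_eq I H G" by blast
  qed
  show ?thesis unfolding Sp_ideal_def using P1 P2 P3 P4 P5 by blast
qed


end
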